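(* Let $I=(i_1\leq i_2\leq\cdots\leq i_r)$ with $r\geq3$ and suppose $I$ has a repeated entry, $i_s=i_{s+1}$ for some $s$. Let $\chi_I=\sum_\varepsilon a_I^\varepsilon w_I^\varepsilon$ with $a_I^\varepsilon\in\mathcal B$, the sum over binary $r$-tuples $\varepsilon=(\epsilon_1,\dots,\epsilon_r)$ with $1\leq\sum\epsilon_j\leq r-1$. If $\alpha(\chi_I)+\beta(\chi_I)=\gamma(\chi_I)+\delta(\chi_I)$, then $\chi_I=0$.
   Context: $\mathcal B$ is a graded commutative rational algebra and $W$ a graded rational vector space concentrated in odd degrees with basis $\{w_i\}$ indexed by a totally ordered set. In $\mathcal B\otimes\land W\otimes\land W$ write $w_i^0=w_i=1\otimes w_i\otimes1$ and $w_i^1=w'_i=1\otimes1\otimes w_i$, and $w_I^\varepsilon=w_{i_1}^{\epsilon_1}\cdots w_{i_r}^{\epsilon_r}$. In $\mathcal B\otimes\land W^{\otimes 3}$ write $w,w',w''$ for $w$ in the three copies. Algebra maps $\alpha,\beta,\gamma,\delta\colon\mathcal B\otimes\land W\otimes\land W\to\mathcal B\otimes\land W\otimes\land W\otimes\land W$, identity on $\mathcal B$, are given by $\alpha(w)=w,\alpha(w')=w'$; $\beta(w)=w+w',\beta(w')=w''$; $\gamma(w)=w,\gamma(w')=w'+w''$; $\delta(w)=w',\delta(w')=w''$. *)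

theory Defs
  imports Main "HOL-Library.Product_Lexorder"
begin

definition graded_comm_rat_algebra :: "(int \<Rightarrow> 'b::ring_1 set) \<Rightarrow> bool" where
  "graded_comm_rat_algebra B \<longleftrightarrow>
     (\<forall>n. 0 \<in> B n \<and> (\<forall>x\<in>B n. \<forall>y\<in>B n. x + y \<in> B n) \<and> (\<forall>x\<in>B n. - x \<in> B n)) \<and>
     (\<forall>x. \<exists>f. finite {n. f n \<noteq> 0} \<and> (\<forall>n. f n \<in> B n) \<and> x = (\<Sum>n\<in>{n. f n \<noteq> 0}. f n)) \<and>
     (\<forall>f. finite {n. f n \<noteq> 0} \<and> (\<forall>n. f n \<in> B n) \<and> (\<Sum>n\<in>{n. f n \<noteq> 0}. f n) = 0
            \<longrightarrow> (\<forall>n. f n = 0)) \<and>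
     (1 \<in> B 0) \<and>
     (\<forall>m n x y. x \<in> B m \<and> y \<in> B n \<longrightarrow> x * y \<in> B (m + n)) \<and>
     (\<forall>m n x y. x \<in> B m \<and> y \<in> B n \<longrightarrow>
                 x * y = (if even (m * n) then y * x else - (y * x))) \<and>
     (\<forall>k::nat. k > 0 \<longrightarrow> (\<exists>y::'b. of_nat k * y = 1))"

text \<open>Generators are pairs (c, i): copy number c (0 = w, 1 = w', 2 = w'') and
  basis index i.  An element of B \<otimes> \<and>(generators) is represented by its coefficient
  function on finite sets S of generators, S standing for the basis monomial
  e_S = product of the elements of S in increasing order.\<close>

definition inversions :: "'g::linorder list \<Rightarrow> nat" where
  "inversions xs = card {(i, j). i < j \<and> j < length xs \<and> xs ! j < xs ! i}"

text \<open>Coefficient of e_S in the product of the word xs of (odd) generators.\<close>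
definition mon :: "'g::linorder list \<Rightarrow> 'g set \<Rightarrow> int" where
  "mon xs S = (if distinct xs \<and> set xs = S then (-1) ^ inversions xs else 0)"

text \<open>Image of a word of generators under the algebra map sending each generator g
  to the sum of the generators in the list \<phi> g; coefficient of e_S.\<close>
definition ext_img :: "('g \<Rightarrow> 'h::linorder list) \<Rightarrow> 'g list \<Rightarrow> 'h set \<Rightarrow> int" where
  "ext_img \<phi> xs S = sum_list (map (\<lambda>c. mon c S) (product_lists (map \<phi> xs)))"

definition Eps :: "nat \<Rightarrow> nat list set" where
  "Eps r = {e. length e = r \<and> set e \<subseteq> {0, 1} \<and> 1 \<le> sum_list e \<and> sum_list e \<le> r - 1}"

definition wordI :: "nat list \<Rightarrow> 'i list \<Rightarrow> (nat \<times> 'i) list" where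
  "wordI e I = zip e I"

text \<open>chi_I = sum_e a_e w_I^e in B \<otimes> \<and>W \<otimes> \<and>W, coefficient at e_S.\<close>
definition chi :: "(nat list \<Rightarrow> 'b::ring_1) \<Rightarrow> 'i::linorder list \<Rightarrow> (nat \<times> 'i) set \<Rightarrow> 'b" where
  "chi a I S = (\<Sum>e\<in>Eps (length I). a e * of_int (mon (wordI e I) S))"

definition chi_img :: "((nat \<times> 'i) \<Rightarrow> (nat \<times> 'i) list) \<Rightarrow> (nat list \<Rightarrow> 'b::ring_1)
                        \<Rightarrow> 'i::linorder list \<Rightarrow> (nat \<times> 'i) set \<Rightarrow> 'b" where
  "chi_img \<phi> a I S = (\<Sum>e\<in>Eps (length I). a e * of_int (ext_img \<phi> (wordI e I) S))"

definition alpha_g :: "nat \<times> 'i \<Rightarrow> (nat \<times> 'i) list" where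
  "alpha_g g = (case g of (c, i) \<Rightarrow> if c = 0 then [(0, i)] else [(1, i)])"
definition beta_g :: "nat \<times> 'i \<Rightarrow> (nat \<times> 'i) list" where
  "beta_g g = (case g of (c, i) \<Rightarrow> if c = 0 then [(0, i), (1, i)] else [(2, i)])"
definition gamma_g :: "nat \<times> 'i \<Rightarrow> (nat \<times> 'i) list" where
  "gamma_g g = (case g of (c, i) \<Rightarrow> if c = 0 then [(0, i)] else [(1, i), (2, i)])"
definition delta_g :: "nat \<times> 'i \<Rightarrow> (nat \<times> 'i) list" where
  "delta_g g = (case g of (c, i) \<Rightarrow> if c = 0 then [(1, i)] else [(2, i)])"

end

theory Submission
  imports Defs "HOL-Library.Multiset"
begin


lemma inversions_Cons:
  "inversions (x # xs) = length (filter (\<lambda>y. y < x) xs) + inversions xs"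
proof -
  let ?n = "length xs"
  let ?A = "{(i, j). i < j \<and> j < length (x#xs) \<and> (x#xs) ! j < (x#xs) ! i}"
  let ?P = "(\<lambda>j. (0::nat, Suc j)) ` {j. j < ?n \<and> xs ! j < x}"
  let ?Q = "(\<lambda>(i, j). (Suc i, Suc j)) ` {(i, j). i < j \<and> j < ?n \<and> xs ! j < xs ! i}"
  have eq: "?A = ?P \<union> ?Q"
  proof (rule set_eqI, clarify)
    fix i j
    show "((i, j) \<in> ?A) = ((i, j) \<in> ?P \<union> ?Q)"
      by (cases i; cases j) (auto simp: image_iff)
  qed
  have fin: "finite {(i, j). i < j \<and> j < ?n \<and> xs ! j < xs ! i}"
    by (rule finite_subset[of _ "{..<?n} \<times> {..<?n}"]) auto
  have "card ?A = card ?P + card ?Q"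
    unfolding eq by (rule card_Un_disjoint) (use fin in auto)
  moreover have "card ?P = card {j. j < ?n \<and> xs ! j < x}"
    by (rule card_image) (auto simp: inj_on_def)
  moreover have "card ?Q = inversions xs"
    unfolding inversions_def by (rule card_image) (auto simp: inj_on_def)
  ultimately show ?thesis
    unfolding inversions_def[of "x#xs"] by (simp add: length_filter_conv_card)
qed

lemma inv_swap:
  fixes a b :: "'g::linorder"
  assumes "a \<noteq> b"
  shows "(-1::int) ^ inversions (u @ a # b # v) = - ((-1) ^ inversions (u @ b # a # v))"
proof (induction u)
  case Nil
  have "a < b \<or> b < a" using assms by auto
  then show ?case by (auto simp: inversions_Cons add_ac)
next
  case (Cons y u)
  have "length (filter (\<lambda>z. z < y) (u @ a # b # v)) = length (filter (\<lambda>z. z < y) (u @ b # a # v))"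
    by simp
  then show ?case using Cons by (simp add: inversions_Cons power_add)
qed

lemma mon_swap: "mon (u @ a # b # v) S = - mon (u @ b # a # v) S"
proof (cases "a = b")
  case True then show ?thesis by (simp add: mon_def)
next
  case False
  have "distinct (u @ a # b # v) = distinct (u @ b # a # v)" by auto
  moreover have "set (u @ a # b # v) = set (u @ b # a # v)" by auto
  ultimately show ?thesis using inv_swap[OF False] by (simp add: mon_def)
qed




definition sg :: "('g::linorder \<Rightarrow> 'h::linorder) \<Rightarrow> 'g list \<Rightarrow> int" where
  "sg f L = (-1) ^ (inversions (map f L) + inversions L)"

lemma sg_Cons: "sg f (x#L) = (-1) ^ (length (filter (\<lambda>y. f y < f x) L) + length (filter (\<lambda>y. y < x) L)) * sg f L"
  by (simp add: sg_def inversions_Cons filter_map o_def power_add add_ac)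

lemma sg_swap: assumes "a \<noteq> b" "f a \<noteq> f b"
  shows "sg f (u@a#b#v) = sg f (u@b#a#v)"
proof -
  have 1: "(-1::int) ^ inversions (map f u @ f a # f b # map f v) = - ((-1) ^ inversions (map f u @ f b # f a # map f v))"
    by (rule inv_swap[OF assms(2)])
  show ?thesis using inv_swap[OF assms(1), of u v] 1 by (simp add: sg_def power_add)
qed

lemma sg_move: "distinct (u@w@x#v) \<Longrightarrow> inj_on f (set (u@w@x#v)) \<Longrightarrow> sg f (u@w@x#v) = sg f (u@x#w@v)"
proof (induction w arbitrary: u)
  case Nil then show ?case by simp
next
  case (Cons y w)
  have "sg f (u@(y#w)@x#v) = sg f ((u@[y])@w@x#v)" by simp
  also have "\<dots> = sg f ((u@[y])@x#w@v)" using Cons by (intro Cons.IH) auto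
  also have "\<dots> = sg f (u@y#x#(w@v))" by simp
  also have "\<dots> = sg f (u@x#y#(w@v))"
  proof (rule sg_swap)
    show "y \<noteq> x" using Cons.prems(1) by auto
    show "f y \<noteq> f x" using Cons.prems by (auto simp: inj_on_def)
  qed
  finally show ?case by simp
qed

lemma sg_set: "distinct L1 \<Longrightarrow> distinct L2 \<Longrightarrow> set L1 = set L2 \<Longrightarrow> inj_on f (set L1) \<Longrightarrow> sg f L1 = sg f L2"
proof (induction L1 arbitrary: L2)
  case Nil then show ?case by simp
next
  case (Cons x L1)
  then have "x \<in> set L2" by auto
  then obtain w v where L2: "L2 = w @ x # v" by (meson split_list)
  have m: "sg f L2 = sg f ([] @ x # w @ v)"
    unfolding L2 using Cons.prems L2 sg_move[of "[]" w x v f] by simp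
  have s: "set L1 = set (w @ v)" using Cons.prems L2 by auto
  have d: "distinct (w@v)" using Cons.prems L2 by auto
  have inj: "inj_on f (set L1)" using Cons.prems(4) by (auto intro: inj_on_subset)
  have ih: "sg f L1 = sg f (w @ v)" using Cons.prems(1) s d inj by (intro Cons.IH) auto
  have "length (filter (\<lambda>y. f y < f x) L1) = length (filter (\<lambda>y. f y < f x) (w@v))"
    using Cons.prems(1) d s by (metis distinct.simps(2) distinct_length_filter)
  moreover have "length (filter (\<lambda>y. y < x) L1) = length (filter (\<lambda>y. y < x) (w@v))"
    using Cons.prems(1) d s by (metis distinct.simps(2) distinct_length_filter)
  ultimately show ?case using m ih by (simp add: sg_Cons)
qed

lemma sum_list_zero: "(\<And>x. x \<in> set xs \<Longrightarrow> f x = 0) \<Longrightarrow> sum_list (map f xs) = (0::'a::monoid_add)"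
  by (induction xs) auto

lemma sum_single: "finite A \<Longrightarrow> a \<in> A \<Longrightarrow> (\<And>x. x \<in> A - {a} \<Longrightarrow> f x = 0) \<Longrightarrow> sum f A = (f a :: 'a::comm_monoid_add)"
  by (simp add: sum.remove)

lemma ext_img_zero1:
  assumes "t \<in> T" "\<forall>x\<in>set xs. t \<notin> set (\<phi> x)"
  shows "ext_img \<phi> xs T = 0"
  unfolding ext_img_def
proof (rule sum_list_zero)
  fix c assume "c \<in> set (product_lists (map \<phi> xs))"
  then have la: "list_all2 (\<lambda>x ys. x \<in> set ys) c (map \<phi> xs)" by (simp add: product_lists_set)
  have "t \<notin> set c"
  proof
    assume "t \<in> set c"
    then obtain k where k: "k < length c" "c ! k = t" by (auto simp: in_set_conv_nth)
    then have "t \<in> set (\<phi> (xs ! k))" using la by (auto simp: list_all2_conv_all_nth)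
    moreover have "xs ! k \<in> set xs" using k la by (auto simp: list_all2_conv_all_nth)
    ultimately show False using assms by auto
  qed
  then show "mon c T = 0" using assms by (auto simp: mon_def)
qed

lemma ext_img_zero2:
  assumes "x \<in> set xs" "\<forall>y\<in>set (\<phi> x). y \<notin> T"
  shows "ext_img \<phi> xs T = 0"
  unfolding ext_img_def
proof (rule sum_list_zero)
  fix c assume "c \<in> set (product_lists (map \<phi> xs))"
  then have la: "list_all2 (\<lambda>x ys. x \<in> set ys) c (map \<phi> xs)" by (simp add: product_lists_set)
  obtain k where k: "k < length xs" "xs ! k = x" using assms by (auto simp: in_set_conv_nth)
  then have "c ! k \<in> set (\<phi> x)" "c ! k \<in> set c" using la by (auto simp: list_all2_conv_all_nth)
  then have "\<not> set c = T" using assms by auto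
  then show "mon c T = 0" by (auto simp: mon_def)
qed

lemma ext_img_unique:
  assumes "\<forall>x\<in>set xs. g x \<in> set (\<phi> x) \<and> distinct (\<phi> x) \<and> (\<forall>y\<in>set (\<phi> x). y \<in> T \<longrightarrow> y = g x)"
  shows "ext_img \<phi> xs T = mon (map g xs) T"
proof -
  let ?L = "product_lists (map \<phi> xs)"
  have d: "distinct ?L" using assms by (intro distinct_product_lists) auto
  have mem: "map g xs \<in> set ?L" using assms by (auto simp: product_lists_set list_all2_conv_all_nth)
  have z: "mon c T = 0" if "c \<in> set ?L - {map g xs}" for c
  proof -
    have la: "list_all2 (\<lambda>x ys. x \<in> set ys) c (map \<phi> xs)" using that by (simp add: product_lists_set)
    then have len: "length c = length xs" by (simp add: list_all2_lengthD)
    have "c \<noteq> map g xs" using that by auto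
    then obtain k where k: "k < length xs" "c ! k \<noteq> g (xs ! k)" using len
      by (metis length_map list_eq_iff_nth_eq nth_map)
    have "c ! k \<in> set (\<phi> (xs ! k))" using la k by (auto simp: list_all2_conv_all_nth)
    then have "c ! k \<notin> T" using assms k by (meson nth_mem)
    moreover have "c ! k \<in> set c" using k len by simp
    ultimately show ?thesis by (auto simp: mon_def)
  qed
  have "ext_img \<phi> xs T = (\<Sum>c\<in>set ?L. mon c T)"
    unfolding ext_img_def by (simp add: sum_list_distinct_conv_sum_set d)
  also have "\<dots> = mon (map g xs) T"
    using z mem by (intro sum_single) auto
  finally show ?thesis .
qed

lemma sum_list_concat': "sum_list (concat xss) = sum_list (map sum_list xss)"
  by (induction xss) auto

lemma sum_list_swap2: "(\<Sum>a\<leftarrow>xs. \<Sum>b\<leftarrow>ys. f a b) = (\<Sum>b\<leftarrow>ys. \<Sum>a\<leftarrow>xs. (f a b :: int))"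
  by (induction xs) (simp_all add: sum_list_addf)

lemma pl_Cons_sum: "sum_list (map h (product_lists (xs#xss))) = (\<Sum>x\<leftarrow>xs. sum_list (map (\<lambda>p. h (x#p)) (product_lists xss)))"
  by (induction xs) (simp_all add: sum_list_concat' map_concat o_def)

lemma pl_antisym_zero:
  assumes "\<And>p a b q. h (p @ a # b # q) = - h (p @ b # a # q)"
  shows "sum_list (map h (product_lists (xss @ ys # ys # zss))) = (0::int)"
  using assms
proof (induction xss arbitrary: h)
  case Nil
  let ?F = "\<lambda>a b. sum_list (map (\<lambda>q. h (a # b # q)) (product_lists zss))"
  have hs: "h (a#b#q) = - h (b#a#q)" for a b q using Nil[of "[]" a b q] by simp
  have anti: "?F a b = - ?F b a" for a b
  proof -
    have "?F a b = sum_list (map (\<lambda>q. - h (b#a#q)) (product_lists zss))"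
      by (rule arg_cong[where f=sum_list], rule map_cong[OF refl], rule hs)
    then show ?thesis by (simp add: uminus_sum_list_map o_def)
  qed
  have e: "sum_list (map h (product_lists (ys # ys # zss))) = (\<Sum>a\<leftarrow>ys. \<Sum>b\<leftarrow>ys. ?F a b)"
    by (simp only: pl_Cons_sum)
  have "(\<Sum>a\<leftarrow>ys. \<Sum>b\<leftarrow>ys. ?F a b) = (\<Sum>b\<leftarrow>ys. \<Sum>a\<leftarrow>ys. ?F a b)" by (rule sum_list_swap2)
  also have "\<dots> = (\<Sum>b\<leftarrow>ys. \<Sum>a\<leftarrow>ys. - ?F b a)" 
    by (rule arg_cong[where f=sum_list], rule map_cong[OF refl], rule arg_cong[where f=sum_list], rule map_cong[OF refl], rule anti)
  also have "\<dots> = - (\<Sum>b\<leftarrow>ys. \<Sum>a\<leftarrow>ys. ?F b a)" by (simp only: uminus_sum_list_map o_def)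
  finally have "(\<Sum>a\<leftarrow>ys. \<Sum>b\<leftarrow>ys. ?F a b) = - (\<Sum>a\<leftarrow>ys. \<Sum>b\<leftarrow>ys. ?F a b)" .
  then show ?case using e by (simp only: append.simps(1))
next
  case (Cons xs xss)
  have "sum_list (map h (product_lists ((xs # xss) @ ys # ys # zss)))
      = (\<Sum>x\<leftarrow>xs. sum_list (map (\<lambda>p. h (x # p)) (product_lists (xss @ ys # ys # zss))))"
    by (simp only: append_Cons pl_Cons_sum)
  also have "\<dots> = 0"
  proof (rule sum_list_zero)
    fix x
    show "sum_list (map (\<lambda>p. h (x # p)) (product_lists (xss @ ys # ys # zss))) = 0"
    proof (rule Cons.IH)
      fix p a b q show "h (x # p @ a # b # q) = - h (x # p @ b # a # q)"
        using Cons.prems[of "x#p" a b q] by simp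
    qed
  qed
  finally show ?case .
qed

lemma ext_img_adj:
  "ext_img \<phi> (u @ g # g # v) T = 0"
  unfolding ext_img_def map_append list.map
  by (rule pl_antisym_zero) (rule mon_swap)




lemma split2: "Suc s < length xs \<Longrightarrow> xs = take s xs @ xs ! s # xs ! Suc s # drop (Suc (Suc s)) xs"
  by (metis Cons_nth_drop_Suc Suc_lessD append_take_drop_id)

lemma Eps_D: "e \<in> Eps r \<Longrightarrow> length e = r \<and> set e \<subseteq> {0, 1}"
  by (simp add: Eps_def)

lemma chi_img_zero: "(\<And>e. e \<in> Eps (length I) \<Longrightarrow> ext_img \<phi> (zip e I) T = 0) \<Longrightarrow> chi_img \<phi> a I T = 0"
  by (simp add: chi_img_def wordI_def)

lemma neg1_sq: "(-1::int)^n * (-1)^n = 1"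
  by (induction n) auto

lemma mon_map:
  fixes g :: "'g::linorder \<Rightarrow> 'h::linorder"
  assumes inj: "inj_on g D" and SD: "S \<subseteq> D" and LD: "set L \<subseteq> D"
    and d0: "distinct L0" and s0: "set L0 = S"
  shows "mon (map g L) (g ` S) = sg g L0 * mon L S"
proof (cases "distinct L \<and> set L = S")
  case True
  have injS: "inj_on g S" using inj SD by (rule inj_on_subset)
  have "sg g L = sg g L0" using True d0 s0 injS by (intro sg_set) auto
  moreover have "distinct (map g L)" using True injS by (simp add: distinct_map)
  moreover have sq: "((-1::int) ^ inversions L) * ((-1) ^ inversions L) = 1"
    by (rule neg1_sq)
  ultimately have m1: "mon (map g L) (g ` S) = (-1) ^ inversions (map g L)"
    and m2: "mon L S = (-1) ^ inversions L" and m3: "sg g L0 = (-1) ^ (inversions (map g L) + inversions L)"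
    using True by (auto simp: mon_def sg_def)
  have "(-1::int) ^ (inversions (map g L) + inversions L) * (-1) ^ inversions L
      = (-1) ^ inversions (map g L) * ((-1) ^ inversions L * (-1) ^ inversions L)"
    by (simp only: power_add mult.assoc)
  then show ?thesis using m1 m2 m3 sq by simp
next
  case False
  have "mon (map g L) (g ` S) = 0"
  proof (cases "distinct L")
    case True
    then have "set L \<noteq> S" using False by auto
    then have "g ` set L \<noteq> g ` S" using inj_on_image_eq_iff[OF inj LD SD] by auto
    then show ?thesis by (simp add: mon_def)
  next
    case False
    then have "\<not> distinct (map g L)" by (auto simp: distinct_map)
    then show ?thesis by (simp add: mon_def)
  qed
  moreover have "mon L S = 0" using False by (auto simp: mon_def)
  ultimately show ?thesis by simp
qed

lemma chi_img_unique:
  fixes g :: "nat \<times> 'i::linorder \<Rightarrow> nat \<times> 'i"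
  assumes inj: "inj_on g {p. fst p \<le> 1}" and SD: "S \<subseteq> {p. fst p \<le> 1}"
    and d0: "distinct L0" and s0: "set L0 = S"
    and u: "\<And>e. e \<in> Eps (length I) \<Longrightarrow> ext_img \<phi> (zip e I) (g ` S) = mon (map g (zip e I)) (g ` S)"
  shows "chi_img \<phi> a I (g ` S) = of_int (sg g L0) * chi a I S"
proof -
  have "chi_img \<phi> a I (g ` S) = (\<Sum>e\<in>Eps (length I). a e * of_int (sg g L0 * mon (zip e I) S))"
    unfolding chi_img_def wordI_def
  proof (rule sum.cong[OF refl])
    fix e assume e: "e \<in> Eps (length I)"
    have "set (zip e I) \<subseteq> {p. fst p \<le> 1}" using Eps_D[OF e] by (auto dest!: set_zip_leftD)
    then show "a e * of_int (ext_img \<phi> (zip e I) (g ` S)) = a e * of_int (sg g L0 * mon (zip e I) S)"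
      using u[OF e] mon_map[OF inj SD _ d0 s0] by simp
  qed
  also have "\<dots> = of_int (sg g L0) * chi a I S"
    unfolding chi_def wordI_def sum_distrib_left
  proof (rule sum.cong[OF refl])
    fix e
    have "a e * of_int (sg g L0 * mon (zip e I) S) = (a e * of_int (sg g L0)) * of_int (mon (zip e I) S)"
      by (simp only: of_int_mult mult.assoc)
    also have "\<dots> = (of_int (sg g L0) * a e) * of_int (mon (zip e I) S)"
      by (simp only: mult_of_int_commute[of "sg g L0" "a e"])
    finally show "a e * of_int (sg g L0 * mon (zip e I) S) = of_int (sg g L0) * (a e * of_int (mon (zip e I) S))"
      by (simp only: mult.assoc)
  qed
  finally show ?thesis .
qed

lemma sg_sq: "of_int (sg g L) * of_int (sg g L) = (1::'b::ring_1)"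
proof -
  have "sg g L * sg g L = 1" unfolding sg_def
    by (rule neg1_sq)
  then show ?thesis by (metis of_int_1 of_int_mult)
qed




lemma pick_one: "r \<in> set [r] \<and> distinct [r] \<and> (\<forall>z\<in>set [r]. z \<in> T \<longrightarrow> z = r)"
  by auto

lemma pick_two: "p = r \<or> q = r \<Longrightarrow> p \<noteq> q \<Longrightarrow> (p \<in> T \<Longrightarrow> p = r) \<Longrightarrow> (q \<in> T \<Longrightarrow> q = r)
  \<Longrightarrow> r \<in> set [p, q] \<and> distinct [p, q] \<and> (\<forall>z\<in>set [p, q]. z \<in> T \<longrightarrow> z = r)"
  by auto

theorem mainTheorem9:
  fixes B :: "int \<Rightarrow> 'b::ring_1 set"
    and I :: "'i::linorder list"
    and a :: "nat list \<Rightarrow> 'b"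
  assumes "graded_comm_rat_algebra B"
    and "length I \<ge> 3"
    and "sorted I"
    and "\<exists>s. Suc s < length I \<and> I ! s = I ! Suc s"
    and "\<forall>S. chi_img alpha_g a I S + chi_img beta_g a I S
              = chi_img gamma_g a I S + chi_img delta_g a I S"
  shows "\<forall>S. chi a I S = 0"
proof
  fix S :: "(nat \<times> 'i) set"
  let ?r = "length I"
  let ?D = "{p :: nat \<times> 'i. fst p \<le> 1}"
  obtain s where s: "Suc s < ?r" "I ! s = I ! Suc s" using assms(4) by blast
  define i where "i = I ! s"
  have hyp: "chi_img alpha_g a I T + chi_img beta_g a I T = chi_img gamma_g a I T + chi_img delta_g a I T" for T
    using assms(5) by blast
  have ZD: "set (zip e I) \<subseteq> ?D" if "e \<in> Eps ?r" for e
    using Eps_D[OF that] by (auto dest!: set_zip_leftD)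
  have spl: "zip e I = take s (zip e I) @ (e ! s, i) # (e ! Suc s, i) # drop (Suc (Suc s)) (zip e I)"
    if "e \<in> Eps ?r" for e
  proof -
    have l: "length (zip e I) = ?r" using Eps_D[OF that] by simp
    have "zip e I = take s (zip e I) @ zip e I ! s # zip e I ! Suc s # drop (Suc (Suc s)) (zip e I)"
      using s l by (intro split2) simp
    then show ?thesis using s l i_def by simp
  qed
  have es: "e ! s \<in> {0,1} \<and> e ! Suc s \<in> {0,1}" if "e \<in> Eps ?r" for e
    using Eps_D[OF that] s by (auto simp: subset_iff)
  show "chi a I S = 0"
  proof (cases "\<exists>e\<in>Eps ?r. mon (zip e I) S \<noteq> 0")
    case False
    then show ?thesis by (simp add: chi_def wordI_def)
  next
    case True
    then obtain e0 where e0: "e0 \<in> Eps ?r" "mon (zip e0 I) S \<noteq> 0" by blast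
    let ?L0 = "zip e0 I"
    have d0: "distinct ?L0" and s0: "set ?L0 = S" using e0(2) by (auto simp: mon_def split: if_splits)
    have SD: "S \<subseteq> ?D" using ZD[OF e0(1)] s0 by simp
    have len0: "length ?L0 = ?r" using Eps_D[OF e0(1)] by simp
    have n1: "?L0 ! s = (e0 ! s, i)" "?L0 ! Suc s = (e0 ! Suc s, i)"
      using len0 s i_def by auto
    have "?L0 ! s \<noteq> ?L0 ! Suc s" using nth_eq_iff_index_eq[OF d0, of s "Suc s"] len0 s by auto
    then have ne: "e0 ! s \<noteq> e0 ! Suc s" using n1 by simp
    have in1: "?L0 ! s \<in> S" "?L0 ! Suc s \<in> S" using s0 len0 s by (metis Suc_lessD nth_mem)+
    have S0: "(0, i) \<in> S" and S1: "(1, i) \<in> S" using es[OF e0(1)] ne in1 n1 by auto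
    have "\<exists>k. k < ?r \<and> k \<noteq> s \<and> k \<noteq> Suc s"
    proof (cases s)
      case 0 then show ?thesis using assms(2) by (intro exI[of _ 2]) auto
    next
      case (Suc n) then show ?thesis using s by (intro exI[of _ 0]) auto
    qed
    then obtain k where k: "k < ?r" "k \<noteq> s" "k \<noteq> Suc s" by blast
    define c where "c = e0 ! k"
    define j where "j = I ! k"
    have xk: "?L0 ! k = (c, j)" using k len0 c_def j_def by simp
    have xS: "(c, j) \<in> S" using xk s0 k len0 by (metis nth_mem)
    have c01: "c \<in> {0, 1}" using Eps_D[OF e0(1)] k c_def by (auto simp: subset_iff)
    have "?L0 ! k \<noteq> ?L0 ! s" "?L0 ! k \<noteq> ?L0 ! Suc s" using nth_eq_iff_index_eq[OF d0, of k s] nth_eq_iff_index_eq[OF d0, of k "Suc s"] len0 s k by auto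
    then have ji: "j \<noteq> i" using xk n1 es[OF e0(1)] ne c01 by auto
    have final: "chi a I S = 0" if "of_int (sg g ?L0) * chi a I S = 0" for g :: "nat \<times> 'i \<Rightarrow> nat \<times> 'i"
    proof -
      have "chi a I S = of_int (sg g ?L0) * (of_int (sg g ?L0) * chi a I S)"
        by (simp add: mult.assoc[symmetric] sg_sq)
      then show ?thesis using that by simp
    qed
    have adj0: "ext_img \<phi> (zip e I) T = 0" if "e \<in> Eps ?r" "e ! s = e ! Suc s" for \<phi> :: "nat \<times> 'i \<Rightarrow> (nat \<times> 'i) list" and e T
      by (subst spl[OF that(1)]) (simp only: that(2) ext_img_adj)
    have mem01: "(v, i) \<in> set (zip e I)" if "e \<in> Eps ?r" "e ! s \<noteq> e ! Suc s" "v \<in> {0,1}" for e v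
    proof -
      have "(e ! s, i) \<in> set (zip e I)" "(e ! Suc s, i) \<in> set (zip e I)"
        by (subst spl[OF that(1)], simp)+
      then show ?thesis using es[OF that(1)] that(2,3) by auto
    qed
    show ?thesis
    proof (cases "c = 1")
      case True
      define \<rho> where "\<rho> = (\<lambda>p::nat\<times>'i. if fst p = 0 then (0, snd p) else if snd p = i then (1, snd p) else (2::nat, snd p))"
      let ?T = "\<rho> ` S"
      have inj: "inj_on \<rho> ?D" by (auto simp: inj_on_def \<rho>_def split: if_splits)
      have T2i: "(2, i) \<notin> ?T" using SD by (auto simp: \<rho>_def split: if_splits)
      have T1: "j' = i" if "(1, j') \<in> ?T" for j' using that SD by (auto simp: \<rho>_def split: if_splits)
      have T0i: "(0, i) \<in> ?T" using S0 by (force simp: \<rho>_def)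
      have T2j: "(2, j) \<in> ?T" using xS True ji by (force simp: \<rho>_def)
      have zA: "chi_img alpha_g a I ?T = 0"
        by (rule chi_img_zero, rule ext_img_zero1[OF T2j]) (auto simp: alpha_g_def split: prod.splits)
      have zD: "chi_img delta_g a I ?T = 0"
        by (rule chi_img_zero, rule ext_img_zero1[OF T0i]) (auto simp: delta_g_def split: prod.splits)
      have zB: "chi_img beta_g a I ?T = 0"
      proof (rule chi_img_zero)
        fix e assume e: "e \<in> Eps (length I)"
        show "ext_img beta_g (zip e I) ?T = 0"
        proof (cases "e ! s = e ! Suc s")
          case True then show ?thesis using adj0 e by blast
        next
          case False
          show ?thesis
            by (rule ext_img_zero2[OF mem01[OF e False, of 1]]) (use T2i in \<open>auto simp: beta_g_def\<close>)
        qed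
      qed
      have uG: "chi_img gamma_g a I ?T = of_int (sg \<rho> ?L0) * chi a I S"
      proof (rule chi_img_unique[OF inj SD d0 s0])
        fix e assume e: "e \<in> Eps (length I)"
        show "ext_img gamma_g (zip e I) ?T = mon (map \<rho> (zip e I)) ?T"
        proof (rule ext_img_unique, intro ballI)
          fix y assume y: "y \<in> set (zip e I)"
          then have "fst y \<le> 1" using ZD[OF e] by auto
          then obtain c' j' where yc: "y = (c', j')" "c' = 0 \<or> c' = 1" by (cases y) (metis fst_conv le_Suc_eq le_zero_eq One_nat_def)
          show "\<rho> y \<in> set (gamma_g y) \<and> distinct (gamma_g y) \<and> (\<forall>z\<in>set (gamma_g y). z \<in> ?T \<longrightarrow> z = \<rho> y)"
          proof (cases "c' = 0")
            case True
            have g1: "gamma_g y = [(0, j')]" and r1: "\<rho> y = (0, j')" using True yc(1) by (simp_all add: gamma_g_def \<rho>_def)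
            show ?thesis unfolding g1 r1 by (rule pick_one)
          next
            case False
            then have c1: "c' = 1" using yc(2) by simp
            show ?thesis
            proof (cases "j' = i")
              case True
              have g1: "gamma_g y = [(1, i), (2, i)]" and r1: "\<rho> y = (1, i)" using True c1 yc(1) by (simp_all add: gamma_g_def \<rho>_def)
              show ?thesis unfolding g1 r1 by (rule pick_two) (use T2i in auto)
            next
              case False
              have g1: "gamma_g y = [(1, j'), (2, j')]" and r1: "\<rho> y = (2, j')" using False c1 yc(1) by (simp_all add: gamma_g_def \<rho>_def)
              show ?thesis unfolding g1 r1 by (rule pick_two) (use T1[of j'] False in auto)
            qed
          qed
        qed
      qed
      show ?thesis using hyp[of ?T] zA zB zD uG final by simp
    next
      case False
      then have c0: "c = 0" using c01 by auto
      define \<rho> where "\<rho> = (\<lambda>p::nat\<times>'i. if fst p = 0 then (if snd p = i then (1, snd p) else (0, snd p)) else (2::nat, snd p))"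
      let ?T = "\<rho> ` S"
      have inj: "inj_on \<rho> ?D" by (auto simp: inj_on_def \<rho>_def split: if_splits)
      have T0i: "(0, i) \<notin> ?T" using SD by (auto simp: \<rho>_def split: if_splits)
      have T1: "j' = i" if "(1, j') \<in> ?T" for j' using that SD by (auto simp: \<rho>_def split: if_splits)
      have T2i: "(2, i) \<in> ?T" using S1 by (force simp: \<rho>_def)
      have T0j: "(0, j) \<in> ?T" using xS c0 ji by (force simp: \<rho>_def)
      have zA: "chi_img alpha_g a I ?T = 0"
        by (rule chi_img_zero, rule ext_img_zero1[OF T2i]) (auto simp: alpha_g_def split: prod.splits)
      have zD: "chi_img delta_g a I ?T = 0"
        by (rule chi_img_zero, rule ext_img_zero1[OF T0j]) (auto simp: delta_g_def split: prod.splits)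
      have zG: "chi_img gamma_g a I ?T = 0"
      proof (rule chi_img_zero)
        fix e assume e: "e \<in> Eps (length I)"
        show "ext_img gamma_g (zip e I) ?T = 0"
        proof (cases "e ! s = e ! Suc s")
          case True then show ?thesis using adj0 e by blast
        next
          case False
          show ?thesis
            by (rule ext_img_zero2[OF mem01[OF e False, of 0]]) (use T0i in \<open>auto simp: gamma_g_def\<close>)
        qed
      qed
      have uB: "chi_img beta_g a I ?T = of_int (sg \<rho> ?L0) * chi a I S"
      proof (rule chi_img_unique[OF inj SD d0 s0])
        fix e assume e: "e \<in> Eps (length I)"
        show "ext_img beta_g (zip e I) ?T = mon (map \<rho> (zip e I)) ?T"
        proof (rule ext_img_unique, intro ballI)
          fix y assume y: "y \<in> set (zip e I)"
          then have "fst y \<le> 1" using ZD[OF e] by auto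
          then obtain c' j' where yc: "y = (c', j')" "c' = 0 \<or> c' = 1" by (cases y) (metis fst_conv le_Suc_eq le_zero_eq One_nat_def)
          show "\<rho> y \<in> set (beta_g y) \<and> distinct (beta_g y) \<and> (\<forall>z\<in>set (beta_g y). z \<in> ?T \<longrightarrow> z = \<rho> y)"
          proof (cases "c' = 0")
            case c0': True
            show ?thesis
            proof (cases "j' = i")
              case True
              have g1: "beta_g y = [(0, i), (1, i)]" and r1: "\<rho> y = (1, i)" using True c0' yc(1) by (simp_all add: beta_g_def \<rho>_def)
              show ?thesis unfolding g1 r1 by (rule pick_two) (use T0i in auto)
            next
              case False
              have g1: "beta_g y = [(0, j'), (1, j')]" and r1: "\<rho> y = (0, j')" using False c0' yc(1) by (simp_all add: beta_g_def \<rho>_def)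
              show ?thesis unfolding g1 r1 by (rule pick_two) (use T1[of j'] False in auto)
            qed
          next
            case False
            then have c1: "c' \<noteq> 0" by simp
            have g1: "beta_g y = [(2, j')]" and r1: "\<rho> y = (2, j')" using c1 yc(1) by (simp_all add: beta_g_def \<rho>_def)
            show ?thesis unfolding g1 r1 by (rule pick_one)
          qed
        qed
      qed
      show ?thesis using hyp[of ?T] zA zG zD uB final by simp
    qed
  qed
qed


end
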